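(* For infinitely many $n$ there exist positive integers $b_1,\dots,b_n$ (each at most $n-1$) such that $(b_1,\dots,b_n)$-BG has an equilibrium graph in the MAX version with diameter $\sqrt{\log n}$.
   Context: Bounded budget network creation game $(b_1,\dots,b_n)$-BG: $n$ players with integer budgets $0\le b_i\le n-1$. A strategy of player $i$ is a set $S_i\subseteq\{1,\dots,n\}\setminus\{i\}$ with $|S_i|=b_i$; a profile is realized by the directed graph $G$ on $u_1,\dots,u_n$ with an arc $\overrightarrow{u_iu_j}$ iff $j\in S_i$. $U(G)$ is the undirected multigraph obtained by ignoring directions; $\operatorname{dist}(u,v)$ is the distance in $U(G)$, defined as $n^2$ between different components. MAX cost: $c_{MAX}(u)=\max_v\operatorname{dist}(u,v)+(\kappa-1)n^2$, $\kappa$ the number of components of $U(G)$. An equilibrium graph in the MAX version is a realization in which no vertex can decrease its MAX cost by changing its own strategy while the others are fixed. The diameter is the maximum distance between two vertices. Logarithms are base 2. *)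

theory Defs
  imports Complex_Main
begin

text \<open>Players are 0, ..., n-1 (player i corresponds to vertex u_(i+1)).
  A strategy profile is S :: nat => nat set; player i buys arcs from i to every j in S i.\<close>

definition valid_strategy :: "nat \<Rightarrow> nat \<Rightarrow> nat \<Rightarrow> nat set \<Rightarrow> bool" where
  "valid_strategy n bi i T \<longleftrightarrow> T \<subseteq> {0..<n} - {i} \<and> card T = bi"

definition valid_profile :: "nat \<Rightarrow> (nat \<Rightarrow> nat) \<Rightarrow> (nat \<Rightarrow> nat set) \<Rightarrow> bool" where
  "valid_profile n b S \<longleftrightarrow> (\<forall>i<n. valid_strategy n (b i) i (S i))"

text \<open>Edge relation of the underlying undirected graph U(G) (multi-edges are irrelevant for distances).\<close>
definition und_edges :: "nat \<Rightarrow> (nat \<Rightarrow> nat set) \<Rightarrow> (nat \<times> nat) set" where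
  "und_edges n S = {(u, v). u < n \<and> v < n \<and> (v \<in> S u \<or> u \<in> S v)}"

definition gdist :: "nat \<Rightarrow> (nat \<Rightarrow> nat set) \<Rightarrow> nat \<Rightarrow> nat \<Rightarrow> nat" where
  "gdist n S u v =
     (if \<exists>k. (u, v) \<in> (und_edges n S) ^^ k
      then (LEAST k. (u, v) \<in> (und_edges n S) ^^ k)
      else n ^ 2)"

definition num_components :: "nat \<Rightarrow> (nat \<Rightarrow> nat set) \<Rightarrow> nat" where
  "num_components n S = card ({0..<n} // ((und_edges n S)\<^sup>*))"

definition cost_max :: "nat \<Rightarrow> (nat \<Rightarrow> nat set) \<Rightarrow> nat \<Rightarrow> nat" where
  "cost_max n S u = Max {gdist n S u v | v. v < n} + (num_components n S - 1) * n ^ 2"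

definition max_equilibrium :: "nat \<Rightarrow> (nat \<Rightarrow> nat) \<Rightarrow> (nat \<Rightarrow> nat set) \<Rightarrow> bool" where
  "max_equilibrium n b S \<longleftrightarrow> valid_profile n b S \<and>
     (\<forall>i<n. \<forall>T. valid_strategy n (b i) i T \<longrightarrow> cost_max n S i \<le> cost_max n (S(i := T)) i)"

definition diameter :: "nat \<Rightarrow> (nat \<Rightarrow> nat set) \<Rightarrow> nat" where
  "diameter n S = Max {gdist n S u v | u v. u < n \<and> v < n}"

end

theory Submission
  imports Defs "HOL-Library.FuncSet"
begin

lemma potential_relpow:
  fixes P :: "'a \<Rightarrow> nat"
  assumes "\<And>x y. (x, y) \<in> R \<Longrightarrow> P x \<le> P y + 1"
  shows "(x, y) \<in> R ^^ k \<Longrightarrow> P x \<le> P y + k"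
proof (induction k arbitrary: y)
  case 0 then show ?case by simp
next
  case (Suc k)
  then obtain c where c: "(x, c) \<in> R ^^ k" "(c, y) \<in> R" by auto
  have "P x \<le> P c + k" using Suc.IH c(1) .
  moreover have "P c \<le> P y + 1" using assms c(2) .
  ultimately show ?case by simp
qed

lemma pow_bound: "12 \<le> (D::nat) \<Longrightarrow> 2 * D ^ 3 \<le> 2 ^ D"
proof (induction D rule: dec_induct)
  case base then show ?case by simp
next
  case (step D)
  have a: "4 * D \<le> D * D" using step.hyps(1) by simp
  have b: "4 * D * D \<le> D * D * D" using mult_le_mono1[OF a, of D] by simp
  have "3 * D * D + 3 * D + 1 \<le> 3 * D * D + D * D" using a step.hyps(1) by linarith
  also have "\<dots> = 4 * D * D" by simp
  finally have "3 * D * D + 3 * D + 1 \<le> D * D * D" using b by linarith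
  then have "(Suc D) ^ 3 \<le> 2 * D ^ 3" by (simp add: power3_eq_cube algebra_simps)
  then show ?case using step.IH by simp
qed

lemma arith_bound:
  fixes D w :: nat
  assumes D: "12 \<le> D" and w: "w \<le> D * 2 ^ D"
  shows "w * (D * (D * (2 ^ D - 1) ^ (D - 2))) < (2 ^ D - 1) ^ D"
proof -
  define Q :: nat where "Q = 2 ^ D"
  have Q4: "4 \<le> Q" unfolding Q_def using D
  proof -
    have "(2::nat) ^ 2 \<le> 2 ^ D" by (rule power_increasing) (use D in auto)
    then show "4 \<le> (2::nat) ^ D" by simp
  qed
  have hb: "2 * D ^ 3 \<le> Q" unfolding Q_def using pow_bound[OF D] .
  define P where "P = Q - 1"
  have P: "Q = P + 1" using Q4 unfolding P_def by simp
  have P3: "3 \<le> P" using Q4 P by simp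
  have "Q * Q < 2 * (P * P)"
  proof -
    have "3 * P \<le> P * P" using P3 by simp
    then have "2 * P + 1 < P * P" using P3 by linarith
    then show ?thesis unfolding P by (simp add: algebra_simps)
  qed
  have "2 * (D ^ 3 * Q) \<le> Q * Q" using hb by simp
  then have key: "D ^ 3 * Q < P * P" using \<open>Q * Q < 2 * (P * P)\<close> by linarith
  have "w * (D * D) \<le> D * Q * (D * D)" using w unfolding Q_def by simp
  also have "\<dots> = D ^ 3 * Q" by (simp add: power3_eq_cube algebra_simps)
  finally have k2: "w * (D * D) < P ^ 2" using key by (simp add: power2_eq_square)
  have Pp: "0 < P ^ (D - 2)" using P3 by simp
  have "w * (D * (D * P ^ (D - 2))) = (w * (D * D)) * P ^ (D - 2)" by (simp add: algebra_simps)
  also have "\<dots> < P ^ 2 * P ^ (D - 2)" using k2 Pp by simp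
  also have "\<dots> = P ^ (2 + (D - 2))" by (simp only: power_add)
  also have "\<dots> = P ^ D"
  proof -
    have "2 + (D - 2) = D" using D by simp
    then show ?thesis by (simp only:)
  qed
  finally show ?thesis using P unfolding Q_def by simp
qed

locale ham =
  fixes D q n :: nat and \<phi> :: "nat \<Rightarrow> nat \<Rightarrow> nat"
  assumes bij: "bij_betw \<phi> {0..<n} (PiE {..<D} (\<lambda>_. {..<q}))"
    and n_def: "n = q ^ D" and q_def: "q = 2 ^ D" and D12: "12 \<le> D"
begin

definition h :: "nat \<Rightarrow> nat \<Rightarrow> nat" where
  "h a b = card {i \<in> {..<D}. \<phi> a i \<noteq> \<phi> b i}"

definition S :: "nat \<Rightarrow> nat set" where
  "S a = {b \<in> {0..<n}. h a b = 1}"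

lemma phi_PiE: "a < n \<Longrightarrow> \<phi> a \<in> PiE {..<D} (\<lambda>_. {..<q})"
  using bij by (auto simp: bij_betw_def)

lemma phi_lt: "a < n \<Longrightarrow> i < D \<Longrightarrow> \<phi> a i < q"
  using phi_PiE by (auto simp: PiE_def Pi_def)

lemma phi_eq: "a < n \<Longrightarrow> b < n \<Longrightarrow> (\<forall>i<D. \<phi> a i = \<phi> b i) \<Longrightarrow> a = b"
proof -
  assume a: "a < n" and b: "b < n" and e: "\<forall>i<D. \<phi> a i = \<phi> b i"
  have "\<phi> a = \<phi> b" using PiE_ext[OF phi_PiE[OF a] phi_PiE[OF b]] e by auto
  then show "a = b" using bij a b by (auto simp: bij_betw_def inj_on_def)
qed

lemma phi_onto: "f \<in> PiE {..<D} (\<lambda>_. {..<q}) \<Longrightarrow> \<exists>a<n. \<phi> a = f"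
  using bij unfolding bij_betw_def by (metis atLeastLessThan_iff imageE)

lemma h_le: "h a b \<le> D"
proof -
  have "h a b \<le> card {..<D}" unfolding h_def by (rule card_mono) auto
  then show ?thesis by simp
qed

lemma h_sym: "h a b = h b a"
  unfolding h_def by metis

lemma h_self: "h a a = 0"
  unfolding h_def by simp

lemma h_tri: "h a c \<le> h a b + h b c"
proof -
  have "{i \<in> {..<D}. \<phi> a i \<noteq> \<phi> c i} \<subseteq> {i \<in> {..<D}. \<phi> a i \<noteq> \<phi> b i} \<union> {i \<in> {..<D}. \<phi> b i \<noteq> \<phi> c i}"
    by auto
  then have "h a c \<le> card ({i \<in> {..<D}. \<phi> a i \<noteq> \<phi> b i} \<union> {i \<in> {..<D}. \<phi> b i \<noteq> \<phi> c i})"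
    unfolding h_def by (intro card_mono) auto
  also have "\<dots> \<le> h a b + h b c" unfolding h_def by (rule card_Un_le)
  finally show ?thesis .
qed

lemma step:
  assumes a: "a < n" and b: "b < n" and hk: "h a b = Suc k"
  shows "\<exists>c<n. h a c = 1 \<and> h c b = k"
proof -
  have "{i \<in> {..<D}. \<phi> a i \<noteq> \<phi> b i} \<noteq> {}" using hk unfolding h_def by (metis card.empty nat.distinct(1))
  then obtain i where i: "i < D" "\<phi> a i \<noteq> \<phi> b i" by auto
  define f where "f = (\<phi> a)(i := \<phi> b i)"
  have "f \<in> PiE {..<D} (\<lambda>_. {..<q})"
    using phi_PiE[OF a] phi_lt[OF b i(1)] i(1) unfolding f_def by (auto simp: PiE_def Pi_def extensional_def)
  then obtain c where c: "c < n" "\<phi> c = f" using phi_onto by blast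
  have "{j \<in> {..<D}. \<phi> a j \<noteq> \<phi> c j} = {i}" using i c(2) unfolding f_def by auto
  then have 1: "h a c = 1" unfolding h_def by simp
  have "{j \<in> {..<D}. \<phi> c j \<noteq> \<phi> b j} = {j \<in> {..<D}. \<phi> a j \<noteq> \<phi> b j} - {i}"
    using i c(2) unfolding f_def by auto
  then have "h c b = h a b - 1" unfolding h_def using i by (simp add: card_Diff_singleton)
  with 1 c hk show ?thesis by auto
qed

lemma und_edges_eq: "und_edges n S = {(a, b). a < n \<and> b < n \<and> h a b = 1}"
  unfolding und_edges_def S_def using h_sym by auto

lemma path: "a < n \<Longrightarrow> b < n \<Longrightarrow> (a, b) \<in> (und_edges n S) ^^ (h a b)"
proof (induction "h a b" arbitrary: a)
  case 0
  then have "a = b" using phi_eq[of a b] unfolding h_def by auto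
  then show ?case using 0 by (simp add: h_self)
next
  case (Suc k)
  obtain c where c: "c < n" "h a c = 1" "h c b = k" using step[OF Suc.prems Suc.hyps(2)[symmetric]] by blast
  have "(c, b) \<in> (und_edges n S) ^^ k" using Suc.hyps(1)[of c] c Suc.prems by simp
  moreover have "(a, c) \<in> und_edges n S" using c Suc.prems by (simp add: und_edges_eq)
  ultimately show ?case using Suc.hyps(2) by (metis relpow_Suc_I2)
qed

lemma gdist_eq: assumes "a < n" "b < n" shows "gdist n S a b = h a b"
proof -
  have ex: "\<exists>k. (a, b) \<in> (und_edges n S) ^^ k" using path assms by blast
  have "(LEAST k. (a, b) \<in> (und_edges n S) ^^ k) = h a b"
  proof (rule Least_equality)
    show "(a, b) \<in> und_edges n S ^^ h a b" using path assms .
  next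
    fix k assume "(a, b) \<in> und_edges n S ^^ k"
    moreover have "\<And>x y. (x, y) \<in> und_edges n S \<Longrightarrow> h x b \<le> h y b + 1"
    proof -
      fix x y assume "(x, y) \<in> und_edges n S"
      then have "h x y = 1" by (simp add: und_edges_eq)
      then show "h x b \<le> h y b + 1" using h_tri[of x b y] by simp
    qed
    ultimately have "h a b \<le> h b b + k"
      using potential_relpow[where P = "\<lambda>z. h z b"] by blast
    then show "h a b \<le> k" by (simp add: h_self)
  qed
  then show ?thesis using ex unfolding gdist_def by simp
qed

lemma count:
  assumes u: "u < n" and W: "W \<subseteq> {0..<n}" and cW: "card W \<le> D * q"
  shows "\<exists>v<n. h u v = D \<and> (\<forall>w\<in>W. D \<le> h w v + 1)"
proof -
  define x where "x = \<phi> u"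
  define G where "G = PiE {..<D} (\<lambda>k. {..<q} - {x k})"
  define B where "B w i j = {v \<in> G. v i = \<phi> w i \<and> v j = \<phi> w j}" for w i j
  have xk: "\<And>k. k < D \<Longrightarrow> x k < q" unfolding x_def using phi_lt[OF u] .
  have cq: "\<And>k. k < D \<Longrightarrow> card ({..<q} - {x k}) = q - 1"
    using xk by (simp add: card_Diff_singleton)
  have finG: "finite G" unfolding G_def by (simp add: finite_PiE)
  have cardG: "card G = (q - 1) ^ D"
    unfolding G_def by (simp add: card_PiE cq)
  have cardB: "card (B w i j) \<le> (q - 1) ^ (D - 2)" if ij: "i < D" "j < D" "i \<noteq> j" for w i j
  proof -
    define K where "K = {..<D} - {i, j}"
    have inj: "inj_on (\<lambda>v. restrict v K) (B w i j)"
    proof (rule inj_onI)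
      fix v1 v2 assume v1: "v1 \<in> B w i j" and v2: "v2 \<in> B w i j" and e: "restrict v1 K = restrict v2 K"
      have "v1 \<in> G" "v2 \<in> G" using v1 v2 unfolding B_def by auto
      then show "v1 = v2" unfolding G_def
      proof (rule PiE_ext)
        fix k assume k: "k \<in> {..<D}"
        show "v1 k = v2 k"
        proof (cases "k = i \<or> k = j")
          case True then show ?thesis using v1 v2 unfolding B_def by auto
        next
          case False
          then have "k \<in> K" using k unfolding K_def by auto
          then show ?thesis using fun_cong[OF e, of k] by simp
        qed
      qed
    qed
    have sub: "(\<lambda>v. restrict v K) ` B w i j \<subseteq> PiE K (\<lambda>k. {..<q} - {x k})"
      unfolding B_def G_def K_def by (auto simp: PiE_def Pi_def)
    have cK: "card K = D - 2" unfolding K_def using ij by (simp add: card_Diff_subset)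
    have "card (PiE K (\<lambda>k. {..<q} - {x k})) = (q - 1) ^ (D - 2)"
    proof -
      have "card (PiE K (\<lambda>k. {..<q} - {x k})) = (\<Prod>k\<in>K. card ({..<q} - {x k}))"
        unfolding K_def by (simp add: card_PiE)
      also have "\<dots> = (\<Prod>k\<in>K. q - 1)" by (rule prod.cong) (auto simp: K_def cq)
      also have "\<dots> = (q - 1) ^ (D - 2)" using cK by simp
      finally show ?thesis .
    qed
    moreover have "card (B w i j) = card ((\<lambda>v. restrict v K) ` B w i j)"
      using inj by (simp add: card_image)
    moreover have "card ((\<lambda>v. restrict v K) ` B w i j) \<le> card (PiE K (\<lambda>k. {..<q} - {x k}))"
      by (rule card_mono[OF _ sub]) (simp add: K_def finite_PiE)
    ultimately show ?thesis by simp
  qed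
  define Bad where "Bad = (\<Union>w\<in>W. \<Union>i\<in>{..<D}. \<Union>j\<in>{..<D}-{i}. B w i j)"
  have finW: "finite W" using W finite_subset by blast
  have c1: "card (\<Union>j\<in>{..<D}-{i}. B w i j) \<le> D * (q - 1) ^ (D - 2)" if "i < D" for w i
  proof -
    have "card (\<Union>j\<in>{..<D}-{i}. B w i j) \<le> (\<Sum>j\<in>{..<D}-{i}. card (B w i j))" by (rule card_UN_le) simp
    also have "\<dots> \<le> (\<Sum>j\<in>{..<D}-{i}. (q - 1) ^ (D - 2))" by (rule sum_mono) (use cardB that in auto)
    also have "\<dots> = card ({..<D}-{i}) * (q - 1) ^ (D - 2)" by simp
    also have "\<dots> \<le> D * (q - 1) ^ (D - 2)"
      by (rule mult_le_mono1) (metis card_Diff1_le card_lessThan finite_lessThan)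
    finally show ?thesis .
  qed
  have c2: "card (\<Union>i\<in>{..<D}. \<Union>j\<in>{..<D}-{i}. B w i j) \<le> D * (D * (q - 1) ^ (D - 2))" for w
  proof -
    have "card (\<Union>i\<in>{..<D}. \<Union>j\<in>{..<D}-{i}. B w i j) \<le> (\<Sum>i\<in>{..<D}. card (\<Union>j\<in>{..<D}-{i}. B w i j))"
      by (rule card_UN_le) simp
    also have "\<dots> \<le> (\<Sum>i\<in>{..<D}. D * (q - 1) ^ (D - 2))" by (rule sum_mono) (use c1 in auto)
    also have "\<dots> = D * (D * (q - 1) ^ (D - 2))" by simp
    finally show ?thesis .
  qed
  have "card Bad \<le> (\<Sum>w\<in>W. card (\<Union>i\<in>{..<D}. \<Union>j\<in>{..<D}-{i}. B w i j))"
    unfolding Bad_def by (rule card_UN_le[OF finW])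
  also have "\<dots> \<le> (\<Sum>w\<in>W. D * (D * (q - 1) ^ (D - 2)))" by (rule sum_mono) (use c2 in auto)
  also have "\<dots> = card W * (D * (D * (q - 1) ^ (D - 2)))" by simp
  also have "\<dots> < (q - 1) ^ D" using arith_bound[OF D12, of "card W"] cW q_def by simp
  finally have lt: "card Bad < card G" using cardG by simp
  have "\<not> G \<subseteq> Bad"
  proof
    assume sub: "G \<subseteq> Bad"
    have "\<And>w i j. B w i j \<subseteq> G" unfolding B_def by blast
    then have "Bad \<subseteq> G" unfolding Bad_def by blast
    then have "Bad = G" using sub by auto
    then show False using lt by simp
  qed
  then obtain v where vG: "v \<in> G" and vB: "v \<notin> Bad" by auto
  have "v \<in> PiE {..<D} (\<lambda>_. {..<q})" using vG unfolding G_def by (auto simp: PiE_def Pi_def)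
  then obtain c where c: "c < n" "\<phi> c = v" using phi_onto by blast
  have "{i \<in> {..<D}. \<phi> u i \<noteq> \<phi> c i} = {..<D}" using vG c(2) unfolding G_def x_def by (auto simp: PiE_def Pi_def)
  then have hD: "h u c = D" unfolding h_def by simp
  have "D \<le> h w c + 1" if w: "w \<in> W" for w
  proof -
    define A where "A = {i \<in> {..<D}. \<phi> w i = v i}"
    have "\<forall>i\<in>A. \<forall>j\<in>A. i = j"
    proof (intro ballI, rule ccontr)
      fix i j assume "i \<in> A" "j \<in> A" "i \<noteq> j"
      then have "v \<in> B w i j" using vG unfolding A_def B_def by auto
      have iD: "i \<in> {..<D}" and jD: "j \<in> {..<D} - {i}" using \<open>i \<in> A\<close> \<open>j \<in> A\<close> \<open>i \<noteq> j\<close> unfolding A_def by auto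
      have "v \<in> (\<Union>j\<in>{..<D}-{i}. B w i j)" using jD \<open>v \<in> B w i j\<close> by blast
      then have "v \<in> (\<Union>i\<in>{..<D}. \<Union>j\<in>{..<D}-{i}. B w i j)" using iD by blast
      then have "v \<in> Bad" unfolding Bad_def using w by blast
      then show False using vB by simp
    qed
    moreover have "finite A" unfolding A_def by simp
    ultimately have cA: "card A \<le> 1" using card_le_Suc0_iff_eq[of A] by simp
    define X where "X = {i \<in> {..<D}. \<phi> w i \<noteq> \<phi> c i}"
    have eq: "{..<D} = A \<union> X" unfolding A_def X_def using c(2) by auto
    have dj: "A \<inter> X = {}" unfolding A_def X_def using c(2) by auto
    have fA: "finite A" unfolding A_def by simp
    have fX: "finite X" unfolding X_def by simp
    have "card (A \<union> X) = card A + card X" by (rule card_Un_disjoint[OF fA fX dj])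
    then have "card {..<D} = card A + h w c" unfolding h_def X_def[symmetric] using eq by simp
    then show ?thesis using cA by simp
  qed
  then show ?thesis using c hD by blast
qed

lemma antipode: "u < n \<Longrightarrow> \<exists>v<n. h u v = D"
  using count[of u "{}"] by auto

lemma n_pos: "0 < n" unfolding n_def q_def by simp

lemma D_le_nsq: "D \<le> n ^ 2"
proof -
  have "D < 2 ^ D" by (rule less_exp)
  also have "(2::nat) ^ D \<le> q ^ D"
  proof -
    have "q ^ 1 \<le> q ^ D" by (rule power_increasing) (use D12 q_def in auto)
    then show ?thesis unfolding q_def by simp
  qed
  also have "q ^ D \<le> n ^ 2" unfolding n_def by (simp add: power2_eq_square)
  finally show ?thesis by simp
qed

lemma S_props: "a < n \<Longrightarrow> 0 < card (S a) \<and> card (S a) \<le> D * q \<and> S a \<subseteq> {0..<n} - {a}"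
proof -
  assume a: "a < n"
  have sub: "S a \<subseteq> {0..<n} - {a}" unfolding S_def using h_self by auto
  have fin: "finite (S a)" unfolding S_def by simp
  obtain v where v: "v < n" "h a v = D" using antipode[OF a] by blast
  have "h a v = Suc (D - 1)" using v D12 by simp
  then obtain c where "c < n" "h a c = 1" using step[OF a v(1)] by blast
  then have "c \<in> S a" unfolding S_def by simp
  then have pos: "0 < card (S a)" using fin by (auto simp: card_gt_0_iff)
  have img: "\<phi> ` S a \<subseteq> (\<lambda>(i, c). (\<phi> a)(i := c)) ` ({..<D} \<times> {..<q})"
  proof
    fix f assume "f \<in> \<phi> ` S a"
    then obtain b where b: "b \<in> S a" "f = \<phi> b" by auto
    then have bn: "b < n" and hb: "card {i \<in> {..<D}. \<phi> a i \<noteq> \<phi> b i} = 1" unfolding S_def h_def by auto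
    obtain i where i: "{i \<in> {..<D}. \<phi> a i \<noteq> \<phi> b i} = {i}" using hb by (rule card_1_singletonE)
    have "i \<in> {j \<in> {..<D}. \<phi> a j \<noteq> \<phi> b j}" by (subst i) simp
    then have iD: "i < D" by simp
    have "\<phi> b = (\<phi> a)(i := \<phi> b i)"
    proof
      fix k show "\<phi> b k = ((\<phi> a)(i := \<phi> b i)) k"
      proof (cases "k < D")
        case True
        show ?thesis
        proof (cases "k = i")
          case True then show ?thesis by simp
        next
          case False
          have "k \<notin> {j \<in> {..<D}. \<phi> a j \<noteq> \<phi> b j}" using False by (subst i) simp
          then show ?thesis using \<open>k < D\<close> False by simp
        qed
      next
        case False then show ?thesis using PiE_arb[OF phi_PiE[OF a], of k] PiE_arb[OF phi_PiE[OF bn], of k] iD by auto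
      qed
    qed
    then show "f \<in> (\<lambda>(i, c). (\<phi> a)(i := c)) ` ({..<D} \<times> {..<q})"
      using b(2) iD phi_lt[OF bn iD] by (intro rev_image_eqI[of "(i, \<phi> b i)"]) auto
  qed
  have "inj_on \<phi> (S a)" using bij sub unfolding bij_betw_def by (meson Diff_subset inj_on_subset)
  then have "card (S a) = card (\<phi> ` S a)" by (simp add: card_image)
  also have "\<dots> \<le> card ((\<lambda>(i, c). (\<phi> a)(i := c)) ` ({..<D} \<times> {..<q}))" by (rule card_mono[OF _ img]) simp
  also have "\<dots> \<le> card ({..<D} \<times> {..<q})" by (rule card_image_le) simp
  also have "\<dots> = D * q" by (simp add: card_cartesian_product)
  finally show ?thesis using pos sub by simp
qed

lemma connected: "a < n \<Longrightarrow> b < n \<Longrightarrow> (a, b) \<in> (und_edges n S)\<^sup>*"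
  using path relpow_imp_rtrancl by blast

lemma num_comp: "num_components n S = 1"
proof -
  have r: "(und_edges n S)\<^sup>* `` {a} = {0..<n}" if a: "a < n" for a
  proof
    show "(und_edges n S)\<^sup>* `` {a} \<subseteq> {0..<n}"
    proof
      fix b assume "b \<in> (und_edges n S)\<^sup>* `` {a}"
      then have "(a, b) \<in> (und_edges n S)\<^sup>*" by simp
      then show "b \<in> {0..<n}" using a by (cases rule: rtranclE) (auto simp: und_edges_eq)
    qed
  next
    show "{0..<n} \<subseteq> (und_edges n S)\<^sup>* `` {a}" using connected[OF a] by auto
  qed
  have "{0..<n} // (und_edges n S)\<^sup>* = {{0..<n}}"
    unfolding quotient_def using r n_pos by auto
  then show ?thesis unfolding num_components_def by simp
qed

lemma cost: assumes a: "a < n" shows "cost_max n S a = D"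
proof -
  have e: "{gdist n S a v |v. v < n} = (\<lambda>v. h a v) ` {..<n}"
  proof (rule set_eqI)
    fix y show "y \<in> {gdist n S a v |v. v < n} \<longleftrightarrow> y \<in> (\<lambda>v. h a v) ` {..<n}"
    proof
      assume "y \<in> {gdist n S a v |v. v < n}"
      then obtain v where "v < n" "y = gdist n S a v" by blast
      then show "y \<in> (\<lambda>v. h a v) ` {..<n}" using gdist_eq[OF a] by (intro rev_image_eqI[of v]) auto
    next
      assume "y \<in> (\<lambda>v. h a v) ` {..<n}"
      then obtain v where "v < n" "y = h a v" by auto
      then have "y = gdist n S a v" using gdist_eq[OF a] by simp
      then show "y \<in> {gdist n S a v |v. v < n}" using \<open>v < n\<close> by blast
    qed
  qed
  have "Max ((\<lambda>v. h a v) ` {..<n}) = D"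
  proof (rule Max_eqI)
    show "finite ((\<lambda>v. h a v) ` {..<n})" by simp
    show "\<And>y. y \<in> (\<lambda>v. h a v) ` {..<n} \<Longrightarrow> y \<le> D" using h_le by auto
    obtain v where "v < n" "h a v = D" using antipode[OF a] by blast
    then show "D \<in> (\<lambda>v. h a v) ` {..<n}" by (intro rev_image_eqI[of v]) auto
  qed
  then show ?thesis unfolding cost_max_def e num_comp by simp
qed

lemma dev:
  assumes u: "u < n" and T: "valid_strategy n (card (S u)) u T"
  shows "D \<le> cost_max n (S(u := T)) u"
proof -
  have Tsub: "T \<subseteq> {0..<n} - {u}" and cT: "card T = card (S u)" using T unfolding valid_strategy_def by auto
  obtain v where v: "v < n" "h u v = D" "\<forall>w\<in>T. D \<le> h w v + 1"
    using count[OF u _, of T] Tsub cT S_props[OF u] by auto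
  have vu: "v \<noteq> u" using v(2) h_self D12 by auto
  define S' where "S' = S(u := T)"
  define P where "P z = (if z = u then D else h z v)" for z
  have edge: "P a \<le> P b + 1" if ab: "(a, b) \<in> und_edges n S'" for a b
  proof -
    have an: "a < n" and bn: "b < n" and ab': "b \<in> S' a \<or> a \<in> S' b" using ab unfolding und_edges_def by auto
    show ?thesis
    proof (cases "a = u")
      case au: True
      show ?thesis
      proof (cases "b = u")
        case True then show ?thesis using au by simp
      next
        case bu: False
        have "D \<le> h b v + 1"
        proof (cases "b \<in> T")
          case True then show ?thesis using v(3) by simp
        next
          case False
          then have "u \<in> S b" using ab' au bu unfolding S'_def by auto
          then have "h b u = 1" unfolding S_def by simp
          then show ?thesis using h_tri[of u v b] h_sym[of u b] v(2) by simp
        qed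
        then show ?thesis using au bu unfolding P_def by simp
      qed
    next
      case au: False
      show ?thesis
      proof (cases "b = u")
        case True then show ?thesis using au h_le[of a v] unfolding P_def by simp
      next
        case bu: False
        have "b \<in> S a \<or> a \<in> S b" using ab' au bu unfolding S'_def by auto
        then have "h a b = 1" unfolding S_def using h_sym by auto
        then show ?thesis using au bu h_tri[of a v b] unfolding P_def by simp
      qed
    qed
  qed
  have g: "D \<le> gdist n S' u v"
  proof (cases "\<exists>k. (u, v) \<in> (und_edges n S') ^^ k")
    case True
    let ?k = "LEAST k. (u, v) \<in> (und_edges n S') ^^ k"
    have "(u, v) \<in> (und_edges n S') ^^ ?k" using True by (rule LeastI_ex)
    then have "P u \<le> P v + ?k" using potential_relpow[where P = P] edge by blast
    then have "D \<le> ?k" using vu h_self[of v] unfolding P_def by simp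
    then show ?thesis using True unfolding gdist_def by simp
  next
    case False then show ?thesis unfolding gdist_def using D_le_nsq by simp
  qed
  have "gdist n S' u v \<le> Max {gdist n S' u w |w. w < n}"
    by (rule Max_ge) (use v(1) in auto)
  then have "D \<le> Max {gdist n S' u w |w. w < n}" using g by linarith
  then have "D \<le> cost_max n S' u" unfolding cost_max_def by (rule trans_le_add1)
  then show ?thesis unfolding S'_def .
qed

lemma main_prop:
  "\<exists>(b :: nat \<Rightarrow> nat) (S :: nat \<Rightarrow> nat set).
     (\<forall>i<n. 0 < b i \<and> b i \<le> n - 1) \<and> max_equilibrium n b S \<and>
     real (diameter n S) = sqrt (log 2 (real n))"
proof (intro exI conjI)
  show "\<forall>i<n. 0 < card (S i) \<and> card (S i) \<le> n - 1"
  proof (intro allI impI conjI)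
    fix i assume i: "i < n"
    show "0 < card (S i)" using S_props[OF i] by simp
    have "card (S i) \<le> card ({0..<n} - {i})" by (rule card_mono) (use S_props[OF i] in auto)
    then show "card (S i) \<le> n - 1" using i by simp
  qed
  show "max_equilibrium n (\<lambda>i. card (S i)) S"
    unfolding max_equilibrium_def valid_profile_def
  proof (intro conjI allI impI)
    fix i assume i: "i < n"
    show "valid_strategy n (card (S i)) i (S i)"
      unfolding valid_strategy_def using S_props[OF i] by blast
    fix T assume T: "valid_strategy n (card (S i)) i T"
    show "cost_max n S i \<le> cost_max n (S(i := T)) i"
      using cost[OF i] dev[OF i T] by simp
  qed
  have e: "{gdist n S u v |u v. u < n \<and> v < n} = (\<lambda>(u, v). h u v) ` ({..<n} \<times> {..<n})"
  proof (rule set_eqI)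
    fix y
    show "y \<in> {gdist n S u v |u v. u < n \<and> v < n} \<longleftrightarrow> y \<in> (\<lambda>(u, v). h u v) ` ({..<n} \<times> {..<n})"
    proof
      assume "y \<in> {gdist n S u v |u v. u < n \<and> v < n}"
      then obtain u v where "u < n" "v < n" "y = gdist n S u v" by blast
      then show "y \<in> (\<lambda>(u, v). h u v) ` ({..<n} \<times> {..<n})"
        using gdist_eq by (intro rev_image_eqI[of "(u, v)"]) auto
    next
      assume "y \<in> (\<lambda>(u, v). h u v) ` ({..<n} \<times> {..<n})"
      then obtain u v where "u < n" "v < n" "y = h u v" by auto
      then have "y = gdist n S u v" using gdist_eq by simp
      then show "y \<in> {gdist n S u v |u v. u < n \<and> v < n}" using \<open>u < n\<close> \<open>v < n\<close> by blast
    qed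
  qed
  have "Max ((\<lambda>(u, v). h u v) ` ({..<n} \<times> {..<n})) = D"
  proof (rule Max_eqI)
    show "finite ((\<lambda>(u, v). h u v) ` ({..<n} \<times> {..<n}))" by simp
    show "\<And>y. y \<in> (\<lambda>(u, v). h u v) ` ({..<n} \<times> {..<n}) \<Longrightarrow> y \<le> D" using h_le by auto
    obtain v where "v < n" "h 0 v = D" using antipode n_pos by blast
    then show "D \<in> (\<lambda>(u, v). h u v) ` ({..<n} \<times> {..<n})" using n_pos
      by (intro rev_image_eqI[of "(0, v)"]) auto
  qed
  then have dD: "diameter n S = D" unfolding diameter_def e .
  have "real n = 2 ^ (D * D)" unfolding n_def q_def by (simp add: power_mult)
  then have "log 2 (real n) = real (D * D)" by (simp add: log_nat_power)
  then have "log 2 (real n) = real D * real D" by simp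
  moreover have "sqrt (real D * real D) = real D" by (simp add: real_sqrt_abs2)
  ultimately show "real (diameter n S) = sqrt (log 2 (real n))" using dD by simp
qed

end

lemma good_n:
  assumes D: "12 \<le> D"
  shows "\<exists>(b :: nat \<Rightarrow> nat) (S :: nat \<Rightarrow> nat set).
     (\<forall>i<((2::nat) ^ D) ^ D. 0 < b i \<and> b i \<le> ((2::nat) ^ D) ^ D - 1) \<and> max_equilibrium (((2::nat) ^ D) ^ D) b S \<and>
     real (diameter (((2::nat) ^ D) ^ D) S) = sqrt (log 2 (real (((2::nat) ^ D) ^ D)))"
proof -
  have c: "card {0..<((2::nat) ^ D) ^ D} = card (PiE {..<D} (\<lambda>_. {..<(2::nat) ^ D}))"
    by (simp only: card_PiE finite_lessThan card_atLeastLessThan card_lessThan prod_constant diff_zero)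
  have f1: "finite {0..<((2::nat) ^ D) ^ D}" by (rule finite_atLeastLessThan)
  have f2: "finite (PiE {..<D} (\<lambda>_. {..<(2::nat) ^ D}))" by (rule finite_PiE) auto
  obtain \<phi> where bj: "bij_betw \<phi> {0..<((2::nat) ^ D) ^ D} (PiE {..<D} (\<lambda>_. {..<(2::nat) ^ D}))"
    using finite_same_card_bij[OF f1 f2 c] by blast
  interpret ham D "2 ^ D" "(2 ^ D) ^ D" \<phi> by (rule ham.intro[OF bj refl refl D])
  show ?thesis by (rule main_prop)
qed

theorem mainTheorem8:
  shows "infinite {n :: nat. \<exists>(b :: nat \<Rightarrow> nat) (S :: nat \<Rightarrow> nat set).
            (\<forall>i<n. 0 < b i \<and> b i \<le> n - 1) \<and> max_equilibrium n b S \<and>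
            real (diameter n S) = sqrt (log 2 (real n))}"
proof -
  define A where "A = {n :: nat. \<exists>(b :: nat \<Rightarrow> nat) (S :: nat \<Rightarrow> nat set).
            (\<forall>i<n. 0 < b i \<and> b i \<le> n - 1) \<and> max_equilibrium n b S \<and>
            real (diameter n S) = sqrt (log 2 (real n))}"
  have unb: "\<exists>x>m. x \<in> A" for m
  proof -
    define D where "D = max 12 (m + 1)"
    have D12: "12 \<le> D" unfolding D_def by simp
    have m1: "m < D" unfolding D_def by simp
    have m2: "D < 2 ^ D" by (rule less_exp)
    have m3: "((2::nat) ^ D) ^ 1 \<le> (2 ^ D) ^ D"
      by (rule power_increasing) (use D12 in auto)
    have m4: "(2::nat) ^ D \<le> (2 ^ D) ^ D" using m3 by (simp only: power_one_right)
    have gt: "m < (2 ^ D) ^ D" using m1 m2 m4 by linarith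
    have mem: "(2 ^ D) ^ D \<in> A" unfolding A_def mem_Collect_eq by (rule good_n[OF D12])
    show ?thesis by (rule exI[of _ "(2 ^ D) ^ D"]) (rule conjI[OF gt mem])
  qed
  have "infinite A"
  proof
    assume "finite A"
    then have "\<exists>m. \<forall>x\<in>A. x \<le> m" by (rule finite_nat_set_iff_bounded_le[THEN iffD1])
    then obtain m where m: "\<forall>x\<in>A. x \<le> m" ..
    obtain x where x: "x > m \<and> x \<in> A" using unb[of m] ..
    then have "x \<le> m" using m by blast
    then show False using x by simp
  qed
  then show ?thesis unfolding A_def .
qed

end
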